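(* Let $S=\{v_1,\ldots,v_n\}\subset\mathbb Z^n$, $n\ge3$, be non-acute, and suppose there are indices $i,s,t,u$ with $E_i=\{s,t,u\}$, $\langle v_s,v_t\rangle=-1$, $\langle v_s,e_i\rangle=-\langle v_t,e_i\rangle=\pm1$, $|\langle v_u,e_i\rangle|=1$ and $\langle v_u,v_u\rangle\ge3$. Let $$S'=(S\setminus\{v_s,v_t,v_u\})\cup\{v_s+v_t,\ v_u-\langle v_u,e_i\rangle e_i\}\subset\mathbb Z^{n-1}=\langle e_1,\ldots,e_{i-1},e_{i+1},\ldots,e_n\rangle$$ be the corresponding contraction. Write $\sum_{v\in S}v=\sum_{\alpha=1}^n k_\alpha e_\alpha$ and $\sum_{v\in S'}v=\sum_{\alpha\ne i}k'_\alpha e_\alpha$, and let $R_o^S=\{\alpha: k_\alpha \text{ odd}\}$, $R_o^{S'}=\{\alpha\ne i: k'_\alpha\text{ odd}\}$. Then $$\sum_{\alpha=1}^n k_\alpha^2>4n-3|R_o^S|\quad\Longleftrightarrow\quad \sum_{\alpha\ne i}k_\alpha'^2>4(n-1)-3|R_o^{S'}|.$$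
   Context: $\mathbb Z^n$ carries the standard dot product with standard basis $e_1,\ldots,e_n$. For $S=\{v_1,\ldots,v_n\}$, $E_j=\{\alpha:\langle v_\alpha,e_j\rangle\ne0\}$. $S$ is non-acute if $a_\alpha:=\langle v_\alpha,v_\alpha\rangle\ge1$ for all $\alpha$, $\langle v_\alpha,v_\beta\rangle\le0$ for $\alpha\ne\beta$, and $a_\alpha\ge-\sum_{\beta\ne\alpha}\langle v_\beta,v_\alpha\rangle$ for all $\alpha$. The inequality $\sum k_\alpha^2>4n-3|R_o|$ for a subset of $n$ vectors in $\mathbb Z^n$ with Wu element $\sum k_\alpha e_\alpha$ is the "Wu obstruction". *)

theory Defs
  imports Main
begin

text \<open>A family of vectors in Z^n is a function v :: nat => nat => int, where v a j is
  the j-th coordinate (pairing with e_j) of the a-th vector. Vectors are indexed by a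
  finite index set I, coordinates by a finite coordinate set J.\<close>

definition ip :: "nat set \<Rightarrow> (nat \<Rightarrow> int) \<Rightarrow> (nat \<Rightarrow> int) \<Rightarrow> int" where
  "ip J x y = (\<Sum>j\<in>J. x j * y j)"

definition Eset :: "nat set \<Rightarrow> (nat \<Rightarrow> nat \<Rightarrow> int) \<Rightarrow> nat \<Rightarrow> nat set" where
  "Eset I v j = {a \<in> I. v a j \<noteq> 0}"

definition non_acute :: "nat set \<Rightarrow> nat set \<Rightarrow> (nat \<Rightarrow> nat \<Rightarrow> int) \<Rightarrow> bool" where
  "non_acute I J v \<longleftrightarrow>
     (\<forall>a\<in>I. ip J (v a) (v a) \<ge> 1) \<and>
     (\<forall>a\<in>I. \<forall>b\<in>I. a \<noteq> b \<longrightarrow> ip J (v a) (v b) \<le> 0) \<and>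
     (\<forall>a\<in>I. ip J (v a) (v a) \<ge> - (\<Sum>b\<in>I - {a}. ip J (v b) (v a)))"

definition wu :: "nat set \<Rightarrow> (nat \<Rightarrow> nat \<Rightarrow> int) \<Rightarrow> nat \<Rightarrow> int" where
  "wu I v j = (\<Sum>a\<in>I. v a j)"

text \<open>Wu obstruction for n vectors in Z^n (index set I, coordinate set J, card J = card I = n).\<close>
definition wu_obstruction :: "nat set \<Rightarrow> nat set \<Rightarrow> (nat \<Rightarrow> nat \<Rightarrow> int) \<Rightarrow> bool" where
  "wu_obstruction I J v \<longleftrightarrow>
     (\<Sum>j\<in>J. (wu I v j)^2) > 4 * int (card I) - 3 * int (card {j\<in>J. odd (wu I v j)})"

text \<open>The contraction: index t is removed, v_s is replaced by v_s + v_t, v_u by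
  v_u - <v_u,e_i> e_i, the other vectors are kept; coordinate i is dropped
  (the new coordinate set is {1..n} - {i}, the new index set {1..n} - {t}).\<close>
definition contraction :: "(nat \<Rightarrow> nat \<Rightarrow> int) \<Rightarrow> nat \<Rightarrow> nat \<Rightarrow> nat \<Rightarrow> nat \<Rightarrow> nat \<Rightarrow> nat \<Rightarrow> int" where
  "contraction v i s t u a j =
     (if a = s then v s j + v t j
      else if a = u then v u j - (if j = i then v u i else 0)
      else v a j)"

end

theory Submission
  imports Defs
begin

theorem lemma1p9:
  fixes n :: nat and v :: "nat \<Rightarrow> nat \<Rightarrow> int" and i s t u :: nat
  assumes "n \<ge> 3"
    and "non_acute {1..n} {1..n} v"
    and "i \<in> {1..n}"
    and "s \<noteq> t" and "s \<noteq> u" and "t \<noteq> u"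
    and "Eset {1..n} v i = {s, t, u}"
    and "ip {1..n} (v s) (v t) = -1"
    and "v s i = - v t i" and "\<bar>v s i\<bar> = 1"
    and "\<bar>v u i\<bar> = 1"
    and "ip {1..n} (v u) (v u) \<ge> 3"
  shows "wu_obstruction {1..n} {1..n} v \<longleftrightarrow>
         wu_obstruction ({1..n} - {t}) ({1..n} - {i}) (contraction v i s t u)"
proof -
  let ?I = "{1..n::nat}"
  let ?c = "contraction v i s t u"
  have stu: "s \<in> ?I" "t \<in> ?I" "u \<in> ?I" using assms(7) unfolding Eset_def by auto
  have kj: "wu (?I - {t}) ?c j = wu ?I v j" if "j \<noteq> i" for j
  proof -
    have "wu (?I - {t}) ?c j = (\<Sum>a\<in>?I - {t}. v a j + (if a = s then v t j else 0))"
      unfolding wu_def contraction_def using that assms(5) by (intro sum.cong) auto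
    also have "\<dots> = (\<Sum>a\<in>?I - {t}. v a j) + v t j"
      using stu assms(4) by (simp add: sum.distrib)
    also have "\<dots> = wu ?I v j"
      unfolding wu_def using stu(2) sum.remove[of ?I t "\<lambda>a. v a j"] by (simp only: finite_atLeastAtMost add.commute simp_thms)
    finally show ?thesis .
  qed
  have ki: "wu ?I v i = v u i"
  proof -
    have "wu ?I v i = (\<Sum>a\<in>{s,t,u}. v a i)"
    proof -
      have z: "\<forall>a\<in>?I - {s,t,u}. v a i = 0"
      proof
        fix a assume a: "a \<in> ?I - {s,t,u}"
        hence "a \<notin> Eset ?I v i" using assms(7) by blast
        thus "v a i = 0" using a unfolding Eset_def by blast
      qed
      have sub: "{s,t,u} \<subseteq> ?I" using stu by blast
      show ?thesis unfolding wu_def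
        using sum.mono_neutral_right[OF finite_atLeastAtMost sub z] by simp
    qed
    also have "\<dots> = v u i" using assms(4,5,6,9) by simp
    finally show ?thesis .
  qed
  have ki2: "(wu ?I v i)^2 = 1" proof -
    have "v u i = 1 \<or> v u i = -1" using assms(11) by linarith
    then show ?thesis using ki by auto
  qed
  have kio: "odd (wu ?I v i)" proof -
    have "v u i = 1 \<or> v u i = -1" using assms(11) by linarith
    then show ?thesis using ki by auto
  qed
  have S: "(\<Sum>j\<in>?I. (wu ?I v j)^2) = (\<Sum>j\<in>?I - {i}. (wu (?I - {t}) ?c j)^2) + 1"
  proof -
    have "(\<Sum>j\<in>?I - {i}. (wu (?I - {t}) ?c j)^2) = (\<Sum>j\<in>?I - {i}. (wu ?I v j)^2)"
      using kj by (intro sum.cong) auto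
    moreover have "(\<Sum>j\<in>?I. (wu ?I v j)^2) = (wu ?I v i)^2 + (\<Sum>j\<in>?I - {i}. (wu ?I v j)^2)"
      using sum.remove[OF finite_atLeastAtMost assms(3), of "\<lambda>j. (wu ?I v j)^2"] .
    ultimately show ?thesis using ki2 by simp
  qed
  have eqset: "{j\<in>?I. odd (wu ?I v j)} = insert i {j\<in>?I - {i}. odd (wu (?I - {t}) ?c j)}"
  proof (rule set_eqI)
    fix j show "j \<in> {j\<in>?I. odd (wu ?I v j)} \<longleftrightarrow> j \<in> insert i {j\<in>?I - {i}. odd (wu (?I - {t}) ?c j)}"
    proof (cases "j = i")
      case True thus ?thesis using assms(3) kio by simp
    next
      case False thus ?thesis using kj[OF False] by simp
    qed
  qed
  have C: "card {j\<in>?I. odd (wu ?I v j)} = card {j\<in>?I - {i}. odd (wu (?I - {t}) ?c j)} + 1"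
    unfolding eqset by simp
  have cI: "card (?I - {t}) = n - 1" using stu by simp
  show ?thesis unfolding wu_obstruction_def S C cI using assms(1) by (simp add: of_nat_diff algebra_simps)
qed

end
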